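(* Let $R$ be a uniform $L$-layered $1$-semifield$^\dagger$ and $a\in R$. Let $f=\sum_{i=0}^m (a^i)^{[\ell_i]}\lambda^{m-i}$ and $g=\sum_{j=0}^n (a^j)^{[k_j]}\lambda^{n-j}$ (so $f$ and $g$ are both $a$-primary). Then $|\Re(f,g)|$ is the element of $\mathcal{G}$-value $a^{mn}$ whose layer $\ell'$ is the permanent of the $(m+n)\times(m+n)$ matrix of the layers of the entries of the Sylvester matrix $\Re(f,g)$.
   Context: Concretely, $R=R(L,\mathcal{G})$ with $L$ a totally ordered commutative semiring$^\dagger$ (semiring without necessarily a zero; for layers of zero entries one adjoins $0$ to $L$) and $\mathcal{G}$ a totally ordered abelian group; elements are $x^{[\ell]}$ ($x\in\mathcal{G}$, layer $\ell$), with $x^{[k]}y^{[\ell]}=(xy)^{[k\ell]}$ and $x^{[k]}+y^{[\ell]}$ equal to $x^{[k]}$ if $x>y$, $y^{[\ell]}$ if $x<y$, $x^{[k+\ell]}$ if $x=y$; $(c)^{[\ell]}$ denotes the element with the $\mathcal{G}$-value of $c$ and layer $\ell$. A zero element $\mathbb{0}_R$ (additive identity, multiplicatively absorbing, layer $0$) is formally adjoined. The layered permanent of an $N\times N$ matrix $A=(a_{ij})$ is $|A|=\sum_{\sigma\in S_N}a_{1,\sigma(1)}\cdots a_{N,\sigma(N)}$. For $f=\sum_{i=0}^m\alpha_i\lambda^i$, $A_n(f)$ is the $n\times(m+n)$ matrix whose $r$-th row is $(\mathbb{0},\dots,\mathbb{0},\alpha_0,\alpha_1,\dots,\alpha_m,\mathbb{0},\dots,\mathbb{0})$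 with $r-1$ leading zeros; for $g$ of degree $n\ge1$ the Sylvester matrix is $\Re(f,g)=\binom{A_n(f)}{A_m(g)}$ and the resultant is $|\Re(f,g)|$ (for constant $f=\alpha_0$ it is $\alpha_0^n$, and symmetrically). The permanent of the layer matrix is computed in $L$ (with ordinary sums and products). *)

theory Defs
  imports "HOL-Combinatorics.Permutations"
begin

text \<open>The totally ordered abelian group G is written
additively (so the paper's x y is x + y and a^i is gpow a i); LZero is the formally
adjoined zero, and Lay x l is the element x^[l].\<close>

datatype ('g, 'l) layered = LZero | Lay 'g 'l

fun gpow :: "'g::monoid_add \<Rightarrow> nat \<Rightarrow> 'g" where
  "gpow a 0 = 0"
| "gpow a (Suc i) = a + gpow a i"

instantiation layered :: ("{ab_semigroup_add,linorder}", ab_semigroup_add) comm_monoid_add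
begin
definition zero_layered where "0 = LZero"
fun plus_layered :: "('a,'b) layered \<Rightarrow> ('a,'b) layered \<Rightarrow> ('a,'b) layered" where
  "plus_layered LZero y = y"
| "plus_layered (Lay x k) LZero = Lay x k"
| "plus_layered (Lay x k) (Lay y l) =
     (if y < x then Lay x k else if x < y then Lay y l else Lay x (k + l))"
instance
proof
  fix a b c :: "('a,'b) layered"
  show "a + b + c = a + (b + c)"
    by (cases a; cases b; cases c) (auto simp: add.assoc)
  show "a + b = b + a"
    by (cases a; cases b) (auto simp: add.commute)
  show "0 + a = a" by (simp add: zero_layered_def)
qed
end

instantiation layered :: ("{comm_monoid_add,linorder}", comm_monoid_mult) comm_monoid_mult
begin
definition one_layered where "1 = Lay 0 1"
fun times_layered :: "('a,'b) layered \<Rightarrow> ('a,'b) layered \<Rightarrow> ('a,'b) layered" where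
  "times_layered LZero y = LZero"
| "times_layered (Lay x k) LZero = LZero"
| "times_layered (Lay x k) (Lay y l) = Lay (x + y) (k * l)"
instance
proof
  fix a b c :: "('a,'b) layered"
  show "a * b * c = a * (b * c)"
    by (cases a; cases b; cases c) (auto simp: add.assoc mult.assoc)
  show "a * b = b * a"
    by (cases a; cases b) (auto simp: add.commute mult.commute)
  show "1 * a = a" by (cases a) (simp_all add: one_layered_def)
qed
end

text \<open>L with a zero adjoined (Zr), used for the layers of zero entries.\<close>

datatype 'l zadj = Zr | NZ 'l

instantiation zadj :: (ab_semigroup_add) comm_monoid_add
begin
definition zero_zadj where "0 = Zr"
fun plus_zadj :: "'a zadj \<Rightarrow> 'a zadj \<Rightarrow> 'a zadj" where
  "plus_zadj Zr y = y"
| "plus_zadj (NZ k) Zr = NZ k"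
| "plus_zadj (NZ k) (NZ l) = NZ (k + l)"
instance
proof
  fix a b c :: "'a zadj"
  show "a + b + c = a + (b + c)"
    by (cases a; cases b; cases c) (auto simp: add.assoc)
  show "a + b = b + a"
    by (cases a; cases b) (auto simp: add.commute)
  show "0 + a = a" by (simp add: zero_zadj_def)
qed
end

instantiation zadj :: (comm_monoid_mult) comm_monoid_mult
begin
definition one_zadj where "1 = NZ 1"
fun times_zadj :: "'a zadj \<Rightarrow> 'a zadj \<Rightarrow> 'a zadj" where
  "times_zadj Zr y = Zr"
| "times_zadj (NZ k) Zr = Zr"
| "times_zadj (NZ k) (NZ l) = NZ (k * l)"
instance
proof
  fix a b c :: "'a zadj"
  show "a * b * c = a * (b * c)"
    by (cases a; cases b; cases c) (auto simp: mult.assoc)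
  show "a * b = b * a"
    by (cases a; cases b) (auto simp: mult.commute)
  show "1 * a = a" by (cases a) (simp_all add: one_zadj_def)
qed
end

fun layer :: "('g, 'l) layered \<Rightarrow> 'l zadj" where
  "layer LZero = Zr"
| "layer (Lay x l) = NZ l"

definition permanent :: "(nat \<Rightarrow> nat \<Rightarrow> 'a::{comm_monoid_add,comm_monoid_mult}) \<Rightarrow> nat \<Rightarrow> 'a" where
  "permanent A N = (\<Sum>\<sigma> | \<sigma> permutes {..<N}. \<Prod>i<N. A i (\<sigma> i))"

text \<open>Sylvester matrix of f = sum_{i\<le>m} alpha_i lambda^i and g = sum_{j\<le>n} beta_j lambda^j,
0-indexed: the first n rows are the shifted rows of A_n(f), the last m rows those of A_m(g).\<close>
definition sylvester ::
  "nat \<Rightarrow> (nat \<Rightarrow> 'a::zero) \<Rightarrow> nat \<Rightarrow> (nat \<Rightarrow> 'a) \<Rightarrow> nat \<Rightarrow> nat \<Rightarrow> 'a" where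
  "sylvester m \<alpha> n \<beta> i j =
     (if i < n then (if i \<le> j \<and> j - i \<le> m then \<alpha> (j - i) else 0)
      else (if i - n \<le> j \<and> j - (i - n) \<le> n then \<beta> (j - (i - n)) else 0))"

definition resultant ::
  "nat \<Rightarrow> (nat \<Rightarrow> 'a::{comm_monoid_add,comm_monoid_mult}) \<Rightarrow> nat \<Rightarrow> (nat \<Rightarrow> 'a) \<Rightarrow> 'a" where
  "resultant m \<alpha> n \<beta> = permanent (sylvester m \<alpha> n \<beta>) (m + n)"

end

theory Submission
  imports Defs
begin

definition H :: "'g \<Rightarrow> 'l zadj \<Rightarrow> ('g,'l) layered" where
  "H v z = (case z of Zr \<Rightarrow> LZero | NZ l \<Rightarrow> Lay v l)"

lemma H_Zr[simp]: "H v Zr = LZero" by (simp add: H_def)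
lemma H_NZ[simp]: "H v (NZ l) = Lay v l" by (simp add: H_def)

lemma gpow_add: "gpow (a::'g::monoid_add) (x + y) = gpow a x + gpow a y"
  by (induction x) (simp_all add: add.assoc)

lemma H_mult:
  fixes u v :: "'g::{comm_monoid_add,linorder}" and x y :: "'l::comm_monoid_mult zadj"
  shows "H u x * H v y = H (u + v) (x * y)"
  by (cases x; cases y) simp_all

lemma H_add:
  fixes v :: "'g::{ab_semigroup_add,linorder}" and x y :: "'l::ab_semigroup_add zadj"
  shows "H v x + H v y = H v (x + y)"
  by (cases x; cases y) simp_all

lemma H_prod:
  fixes a :: "'g::{comm_monoid_add,linorder}" and A :: "'i \<Rightarrow> ('g,'l::comm_monoid_mult) layered"
  assumes "finite I" "\<And>i. i \<in> I \<Longrightarrow> A i = H (gpow a (E i)) (layer (A i))"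
  shows "prod A I = H (gpow a (sum E I)) (prod (\<lambda>i. layer (A i)) I)"
  using assms
proof (induction I rule: finite_induct)
  case empty
  then show ?case by (simp add: one_layered_def one_zadj_def)
next
  case (insert x F)
  have "prod A (insert x F) = A x * prod A F" using insert by simp
  also have "\<dots> = A x * H (gpow a (sum E F)) (prod (\<lambda>i. layer (A i)) F)"
    using insert by simp
  also have "\<dots> = H (gpow a (E x)) (layer (A x)) * H (gpow a (sum E F)) (prod (\<lambda>i. layer (A i)) F)"
    using insert.prems[of x] by (intro arg_cong[where f="\<lambda>t. t * H (gpow a (sum E F)) (prod (\<lambda>i. layer (A i)) F)"]) simp
  also have "\<dots> = H (gpow a (sum E (insert x F))) (prod (\<lambda>i. layer (A i)) (insert x F))"
    by (simp only: H_mult gpow_add sum.insert[OF insert(1,2)] prod.insert[OF insert(1,2)])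
  finally show ?case .
qed

lemma H_sum:
  fixes v :: "'g::{comm_monoid_add,linorder}" and z :: "'i \<Rightarrow> 'l::ab_semigroup_add zadj"
  assumes "finite S"
  shows "(\<Sum>s\<in>S. H v (z s)) = H v (sum z S)"
  using assms
  by (induction S rule: finite_induct) (simp_all add: H_add zero_layered_def zero_zadj_def)

lemma zadj_sum_Zr:
  fixes z :: "'i \<Rightarrow> 'l::ab_semigroup_add zadj"
  assumes "finite S" "sum z S = Zr" "x \<in> S"
  shows "z x = Zr"
  using assms
proof (induction S rule: finite_induct)
  case empty then show ?case by simp
next
  case (insert y F)
  have "z y + sum z F = Zr" using insert by simp
  then have "z y = Zr \<and> sum z F = Zr" by (cases "z y"; cases "sum z F") simp_all
  then show ?case using insert by auto
qed

lemma zadj_prod_NZ: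
  fixes z :: "'i \<Rightarrow> 'l::comm_monoid_mult zadj"
  assumes "finite S" "\<And>x. x \<in> S \<Longrightarrow> z x \<noteq> Zr"
  shows "prod z S \<noteq> Zr"
  using assms
proof (induction S rule: finite_induct)
  case empty then show ?case by (simp add: one_zadj_def)
next
  case (insert y F)
  then have "z y \<noteq> Zr" "prod z F \<noteq> Zr" by auto
  then have "z y * prod z F \<noteq> Zr" by (cases "z y"; cases "prod z F") simp_all
  then show ?case using insert by simp
qed

lemma zadj_prod_Zr:
  fixes z :: "'i \<Rightarrow> 'l::comm_monoid_mult zadj"
  assumes "finite S" "x \<in> S" "z x = Zr"
  shows "prod z S = Zr"
proof -
  have "prod z S = z x * prod z (S - {x})" using assms by (simp add: prod.remove)
  then show ?thesis using assms by simp
qed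

theorem lemma8p5:
  fixes a :: "'g::linordered_ab_group_add"
    and l k :: "nat \<Rightarrow> 'l::{comm_semiring, comm_monoid_mult, linorder}"
    and \<alpha> \<beta> :: "nat \<Rightarrow> ('g, 'l) layered"
    and m n :: nat
  assumes f: "\<And>i. i \<le> m \<Longrightarrow> \<alpha> (m - i) = Lay (gpow a i) (l i)"
    and g: "\<And>j. j \<le> n \<Longrightarrow> \<beta> (n - j) = Lay (gpow a j) (k j)"
  shows "\<exists>l'. permanent (\<lambda>i j. layer (sylvester m \<alpha> n \<beta> i j)) (m + n) = NZ l'
           \<and> resultant m \<alpha> n \<beta> = Lay (gpow a (m * n)) l'"
proof -
  define N where "N = m + n"
  define A where "A = sylvester m \<alpha> n \<beta>"
  define E :: "nat \<Rightarrow> nat \<Rightarrow> nat" where "E i j = (if i < n then m + i - j else i - j)" for i j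
  have entry: "A i j = H (gpow a (E i j)) (layer (A i j))"
    and entry_int: "A i j \<noteq> LZero \<Longrightarrow> int (E i j) = (if i < n then int m else 0) + int i - int j"
    for i j
  proof -
    have "A i j = H (gpow a (E i j)) (layer (A i j)) \<and>
      (A i j \<noteq> LZero \<longrightarrow> int (E i j) = (if i < n then int m else 0) + int i - int j)"
    proof (cases "i < n")
      case True
      show ?thesis
      proof (cases "i \<le> j \<and> j - i \<le> m")
        case c: True
        have "\<alpha> (m - (m - (j - i))) = Lay (gpow a (m - (j - i))) (l (m - (j - i)))"
          by (rule f) simp
        moreover have "m - (m - (j - i)) = j - i" using c by arith
        ultimately have "A i j = Lay (gpow a (m - (j - i))) (l (m - (j - i)))"
          using True c by (simp add: A_def sylvester_def)
        moreover have "E i j = m - (j - i)" using True c unfolding E_def by arith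
        ultimately show ?thesis using True c by (auto simp: of_nat_diff)
      next
        case False
        then have "A i j = LZero" unfolding A_def sylvester_def zero_layered_def using True False by auto
        then show ?thesis by simp
      qed
    next
      case nt: False
      show ?thesis
      proof (cases "i - n \<le> j \<and> j - (i - n) \<le> n")
        case c: True
        have "\<beta> (n - (n - (j - (i - n)))) = Lay (gpow a (n - (j - (i - n)))) (k (n - (j - (i - n))))"
          by (rule g) simp
        moreover have "n - (n - (j - (i - n))) = j - (i - n)" using c by arith
        ultimately have "A i j = Lay (gpow a (n - (j - (i - n)))) (k (n - (j - (i - n))))"
          using nt c by (simp add: A_def sylvester_def)
        moreover have "E i j = n - (j - (i - n))" using nt c unfolding E_def by arith
        ultimately show ?thesis using nt c by (auto simp: of_nat_diff)
      next
        case False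
        then have "A i j = LZero" unfolding A_def sylvester_def zero_layered_def using nt False by auto
        then show ?thesis by simp
      qed
    qed
    then show "A i j = H (gpow a (E i j)) (layer (A i j))"
      and "A i j \<noteq> LZero \<Longrightarrow> int (E i j) = (if i < n then int m else 0) + int i - int j"
      by auto
  qed
  define P where "P \<sigma> = (\<Prod>i<N. layer (A i (\<sigma> i)))" for \<sigma>
  have trm: "(\<Prod>i<N. A i (\<sigma> i)) = H (gpow a (m * n)) (P \<sigma>)" if \<sigma>: "\<sigma> permutes {..<N}" for \<sigma>
  proof -
    have "(\<Prod>i<N. A i (\<sigma> i)) = H (gpow a (\<Sum>i<N. E i (\<sigma> i))) (P \<sigma>)"
      unfolding P_def by (rule H_prod) (auto intro: entry)
    also have "\<dots> = H (gpow a (m * n)) (P \<sigma>)"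
    proof (cases "P \<sigma> = Zr")
      case True then show ?thesis by simp
    next
      case False
      have nz: "A i (\<sigma> i) \<noteq> LZero" if "i < N" for i
      proof
        assume "A i (\<sigma> i) = LZero"
        then have "P \<sigma> = Zr" unfolding P_def
          by (intro zadj_prod_Zr[where x = i]) (use that in auto)
        with False show False by simp
      qed
      have "int (\<Sum>i<N. E i (\<sigma> i)) = (\<Sum>i<N. int (E i (\<sigma> i)))" by simp
      also have "\<dots> = (\<Sum>i<N. (if i < n then int m else 0) + int i - int (\<sigma> i))"
        using nz entry_int by (intro sum.cong) auto
      also have "\<dots> = (\<Sum>i<N. (if i < n then int m else 0)) + (\<Sum>i<N. int i) - (\<Sum>i<N. int (\<sigma> i))"
        by (simp add: sum.distrib sum_subtractf)
      also have "(\<Sum>i<N. int (\<sigma> i)) = (\<Sum>i<N. int i)"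
        using sum.permute[OF \<sigma>, of int] by (simp add: comp_def)
      also have "(\<Sum>i<N. (if i < n then int m else 0)) = (\<Sum>i\<in>{..<N} \<inter> {i. i < n}. int m)"
        by (simp only: sum.inter_restrict[OF finite_lessThan]) (simp add: if_distrib)
      also have "{..<N} \<inter> {i. i < n} = {..<n}" by (auto simp: N_def)
      finally have "int (\<Sum>i<N. E i (\<sigma> i)) = int (m * n)" by simp
      then have "(\<Sum>i<N. E i (\<sigma> i)) = m * n" by linarith
      then show ?thesis by simp
    qed
    finally show ?thesis .
  qed
  define Pm where "Pm = permanent (\<lambda>i j. layer (A i j)) N"
  have Pm_eq: "Pm = (\<Sum>\<sigma> | \<sigma> permutes {..<N}. P \<sigma>)"
    by (simp add: Pm_def permanent_def P_def)
  have fin: "finite {\<sigma>. \<sigma> permutes {..<N}}" by (simp add: finite_permutations)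
  have res: "resultant m \<alpha> n \<beta> = H (gpow a (m * n)) Pm"
  proof -
    have "resultant m \<alpha> n \<beta> = (\<Sum>\<sigma> | \<sigma> permutes {..<N}. \<Prod>i<N. A i (\<sigma> i))"
      by (simp add: resultant_def permanent_def A_def N_def)
    also have "\<dots> = (\<Sum>\<sigma> | \<sigma> permutes {..<N}. H (gpow a (m * n)) (P \<sigma>))"
      by (intro sum.cong) (auto intro: trm)
    also have "\<dots> = H (gpow a (m * n)) Pm"
      unfolding Pm_eq by (rule H_sum[OF fin])
    finally show ?thesis .
  qed
  have "Pm \<noteq> Zr"
  proof
    assume "Pm = Zr"
    then have "P id = Zr"
      using zadj_sum_Zr[OF fin, of P id] Pm_eq by (simp add: permutes_id)
    moreover have "P id \<noteq> Zr"
      unfolding P_def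
    proof (rule zadj_prod_NZ)
      fix i assume i: "i \<in> {..<N}"
      show "layer (A i (id i)) \<noteq> Zr"
      proof (cases "i < n")
        case True
        have "\<alpha> (m - m) = Lay (gpow a m) (l m)" by (rule f) simp
        then show ?thesis using True by (simp add: A_def sylvester_def)
      next
        case False
        have "\<beta> (n - 0) = Lay (gpow a 0) (k 0)" by (rule g) simp
        moreover have "i - (i - n) = n" using False by simp
        ultimately show ?thesis using False by (simp add: A_def sylvester_def)
      qed
    qed simp
    ultimately show False by simp
  qed
  then obtain l' where "Pm = NZ l'" by (cases Pm) auto
  then show ?thesis using res by (auto simp: Pm_def A_def N_def)
qed

end
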